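(* Let $K\ge1$, $n\ge0$ be integers and $\varepsilon\in(0,1)$. Consider standard percolation on $\mathbb{Z}_K$ in which each horizontal and each vertical edge is open independently with probability $1-\varepsilon$, and let $D^K(n,0)$ be the graph distance from $(0,0)$ to $(n,0)$ using open edges of $\mathbb{Z}_K$. Let $A=A(K,n,\varepsilon)$ be the event that in each unit square of $[\![0,n]\!]\times[\![-K,K]\!]$ (i.e. with vertices $(i,j),(i+1,j),(i,j+1),(i+1,j+1)$) at most one of its four edges is closed. Then \[ \mathbf{E}\big(D^K(n,0)\,\big|\,A\big)\le \mathbf{E}\big(D^{K,d}(n,0)\big)+3K. \]
   Context: $\mathbb{Z}_K=\mathbb{Z}\times[\![-K,K]\!]$ with vertical edges $(i,j)\to(i,j+1)$ and horizontal edges $(i,j)\to(i+1,j)$, each of length $1$. $D^{K,d}(n,0)$ refers to the Cross Model with the same $K,\varepsilon$: $\mathbb{Z}_K$ with additionally diagonal edges $(i,j)\to(i+1,j\pm1)$ of length $2$, where all vertical and diagonal edges are open and each horizontal edge is open with probability $1-\varepsilon$ independently (vertical and horizontal edges of length $1$); $D^{K,d}(n,0)$ is the length of a shortest open path in this model from $(0,0)$ to $(n,0)$. *)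

theory Defs
  imports "HOL-Probability.Probability"
begin

text \<open>Edges are indexed by keys of type bool * int * int:
  (True,i,j) is the horizontal edge (i,j)--(i+1,j),
  (False,i,j) is the vertical edge (i,j)--(i,j+1).
  A configuration omega maps each edge key to True (open) or False (closed).\<close>

definition in_strip :: "nat \<Rightarrow> int \<times> int \<Rightarrow> bool" where
  "in_strip K v \<longleftrightarrow> - int K \<le> snd v \<and> snd v \<le> int K"

definition strip_edges :: "nat \<Rightarrow> (bool \<times> int \<times> int) set" where
  "strip_edges K =
     {(True, i, j) | i j. - int K \<le> j \<and> j \<le> int K} \<union>
     {(False, i, j) | i j. - int K \<le> j \<and> j < int K}"

definition horiz_edges :: "nat \<Rightarrow> (bool \<times> int \<times> int) set" where
  "horiz_edges K = {(True, i, j) | i j. - int K \<le> j \<and> j \<le> int K}"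

definition perc_space :: "nat \<Rightarrow> real \<Rightarrow> (bool \<times> int \<times> int \<Rightarrow> bool) measure" where
  "perc_space K eps = PiM (strip_edges K) (\<lambda>_. measure_pmf (bernoulli_pmf (1 - eps)))"

definition cross_space :: "nat \<Rightarrow> real \<Rightarrow> (bool \<times> int \<times> int \<Rightarrow> bool) measure" where
  "cross_space K eps = PiM (horiz_edges K) (\<lambda>_. measure_pmf (bernoulli_pmf (1 - eps)))"

definition perc_w :: "nat \<Rightarrow> (bool \<times> int \<times> int \<Rightarrow> bool) \<Rightarrow> int \<times> int \<Rightarrow> int \<times> int \<Rightarrow> ennreal" where
  "perc_w K \<omega> u v =
     (if in_strip K u \<and> in_strip K v \<and>
         ((v = (fst u + 1, snd u) \<and> \<omega> (True, fst u, snd u)) \<or>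
          (u = (fst v + 1, snd v) \<and> \<omega> (True, fst v, snd v)) \<or>
          (v = (fst u, snd u + 1) \<and> \<omega> (False, fst u, snd u)) \<or>
          (u = (fst v, snd v + 1) \<and> \<omega> (False, fst v, snd v)))
      then 1 else \<top>)"

text \<open>Length of a single step u -> v in the Cross Model: open horizontal edges and
  (always open) vertical edges have length 1, (always open) diagonal edges
  (i,j)--(i+1,j+-1) have length 2; infinity if there is no open edge.\<close>
definition cross_w :: "nat \<Rightarrow> (bool \<times> int \<times> int \<Rightarrow> bool) \<Rightarrow> int \<times> int \<Rightarrow> int \<times> int \<Rightarrow> ennreal" where
  "cross_w K \<omega> u v =
     (if in_strip K u \<and> in_strip K v \<and>
         ((v = (fst u + 1, snd u) \<and> \<omega> (True, fst u, snd u)) \<or>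
          (u = (fst v + 1, snd v) \<and> \<omega> (True, fst v, snd v)) \<or>
          v = (fst u, snd u + 1) \<or> u = (fst v, snd v + 1))
      then 1
      else if in_strip K u \<and> in_strip K v \<and>
         (\<bar>fst v - fst u\<bar> = 1 \<and> \<bar>snd v - snd u\<bar> = 1)
      then 2 else \<top>)"

definition path_len :: "(int \<times> int \<Rightarrow> int \<times> int \<Rightarrow> ennreal) \<Rightarrow> (int \<times> int) list \<Rightarrow> ennreal" where
  "path_len w p = sum_list (map2 w p (tl p))"

definition shortest :: "(int \<times> int \<Rightarrow> int \<times> int \<Rightarrow> ennreal) \<Rightarrow> nat \<Rightarrow> ennreal" where
  "shortest w n = (INF p \<in> {p. p \<noteq> [] \<and> hd p = (0, 0) \<and> last p = (int n, 0)}. path_len w p)"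

definition perc_dist :: "nat \<Rightarrow> nat \<Rightarrow> (bool \<times> int \<times> int \<Rightarrow> bool) \<Rightarrow> ennreal" where
  "perc_dist K n \<omega> = shortest (perc_w K \<omega>) n"

definition cross_dist :: "nat \<Rightarrow> nat \<Rightarrow> (bool \<times> int \<times> int \<Rightarrow> bool) \<Rightarrow> ennreal" where
  "cross_dist K n \<omega> = shortest (cross_w K \<omega>) n"

definition square_edges :: "int \<Rightarrow> int \<Rightarrow> (bool \<times> int \<times> int) set" where
  "square_edges i j = {(True, i, j), (True, i, j + 1), (False, i, j), (False, i + 1, j)}"

definition event_A :: "nat \<Rightarrow> real \<Rightarrow> nat \<Rightarrow> (bool \<times> int \<times> int \<Rightarrow> bool) set" where
  "event_A K eps n = {\<omega> \<in> space (perc_space K eps).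
     \<forall>i j. 0 \<le> i \<and> i < int n \<and> - int K \<le> j \<and> j < int K \<longrightarrow>
       card {e \<in> square_edges i j. \<not> \<omega> e} \<le> 1}"

end

theory Submission
  imports Defs
begin


definition SW :: "'e set \<Rightarrow> (bool \<Rightarrow> ennreal) \<Rightarrow> (('e \<Rightarrow> bool) \<Rightarrow> ennreal) \<Rightarrow> ennreal" where
  "SW J w h = (\<Sum>x\<in>PiE J (\<lambda>_. UNIV). (\<Prod>j\<in>J. w (x j)) * h x)"

lemma sum_PiE_insert:
  assumes "a \<notin> J"
  shows "(\<Sum>x\<in>PiE (insert a J) (\<lambda>_. (UNIV::bool set)). F x) =
         (\<Sum>b\<in>UNIV. \<Sum>y\<in>PiE J (\<lambda>_. UNIV). F (y(a:=b)))"
proof -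
  have "(\<Sum>x\<in>PiE (insert a J) (\<lambda>_. (UNIV::bool set)). F x)
      = (\<Sum>z\<in>(UNIV \<times> PiE J (\<lambda>_. UNIV)). F ((\<lambda>(y, g). g(a := y)) z))"
    unfolding PiE_insert_eq
    by (subst sum.reindex) (use inj_combinator[OF assms, of "\<lambda>_. UNIV"] in auto)
  also have "\<dots> = (\<Sum>b\<in>UNIV. \<Sum>y\<in>PiE J (\<lambda>_. UNIV). F (y(a:=b)))"
    by (simp add: sum.cartesian_product split_def)
  finally show ?thesis .
qed

lemma SW_insert:
  assumes "finite J" "a \<notin> J"
  shows "SW (insert a J) w h = w True * SW J w (\<lambda>y. h (y(a:=True))) + w False * SW J w (\<lambda>y. h (y(a:=False)))"
proof -
  have pr: "(\<Prod>j\<in>insert a J. w ((y(a:=b)) j)) = w b * (\<Prod>j\<in>J. w (y j))" for y b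
  proof -
    have "(\<Prod>j\<in>J. w ((y(a:=b)) j)) = (\<Prod>j\<in>J. w (y j))"
      by (rule prod.cong) (use assms in auto)
    then show ?thesis using assms by simp
  qed
  have "SW (insert a J) w h = (\<Sum>b\<in>UNIV. \<Sum>y\<in>PiE J (\<lambda>_. UNIV). w b * ((\<Prod>j\<in>J. w (y j)) * h (y(a:=b))))"
    unfolding SW_def sum_PiE_insert[OF assms(2)] pr by (simp add: mult.assoc)
  also have "\<dots> = (\<Sum>b\<in>UNIV. w b * SW J w (\<lambda>y. h (y(a:=b))))"
    by (simp add: SW_def sum_distrib_left)
  also have "\<dots> = w True * SW J w (\<lambda>y. h (y(a:=True))) + w False * SW J w (\<lambda>y. h (y(a:=False)))"
    by (simp add: UNIV_bool add.commute)
  finally show ?thesis .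
qed

lemma SW_mono: "(\<And>x. h x \<le> h' x) \<Longrightarrow> SW J w h \<le> SW J w h'"
  unfolding SW_def by (intro sum_mono mult_left_mono) auto

lemma two_point:
  fixes \<alpha> \<beta> F0 F1 G0 G1 :: ennreal
  assumes "\<alpha> + \<beta> = 1" "F0 \<le> F1" "G1 \<le> G0"
  shows "\<alpha> * (F1 * G1) + \<beta> * (F0 * G0) \<le> (\<alpha> * F1 + \<beta> * F0) * (\<alpha> * G1 + \<beta> * G0)"
proof -
  obtain a where a: "F1 = F0 + a" using assms(2) by (metis ennreal_le_iff2 le_iff_add)
  obtain b where b: "G0 = G1 + b" using assms(3) by (metis le_iff_add)
  have "\<alpha> * (F1 * G1) + \<beta> * (F0 * G0) = (\<alpha> + \<beta>) * (\<alpha> * (F1 * G1) + \<beta> * (F0 * G0))"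
    using assms(1) by simp
  also have "\<dots> = \<alpha>*\<alpha>*F1*G1 + \<alpha>*\<beta>*(F1*G1 + F0*G0) + \<beta>*\<beta>*F0*G0"
    by (simp add: algebra_simps)
  also have "\<dots> \<le> \<alpha>*\<alpha>*F1*G1 + \<alpha>*\<beta>*(F1*G0 + F0*G1) + \<beta>*\<beta>*F0*G0"
  proof -
    have "F1*G1 + F0*G0 \<le> F1*G0 + F0*G1"
      unfolding a b by (simp add: algebra_simps)
    then have "\<alpha>*\<beta>*(F1*G1 + F0*G0) \<le> \<alpha>*\<beta>*(F1*G0 + F0*G1)" by (rule mult_left_mono) simp
    then show ?thesis by (intro add_mono) auto
  qed
  also have "\<dots> = (\<alpha> * F1 + \<beta> * F0) * (\<alpha> * G1 + \<beta> * G0)"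
    by (simp add: algebra_simps)
  finally show ?thesis .
qed

definition incr :: "(('e \<Rightarrow> bool) \<Rightarrow> ennreal) \<Rightarrow> bool" where
  "incr f \<longleftrightarrow> (\<forall>x y. (\<forall>e. x e \<longrightarrow> y e) \<longrightarrow> f x \<le> f y)"
definition decr :: "(('e \<Rightarrow> bool) \<Rightarrow> ennreal) \<Rightarrow> bool" where
  "decr f \<longleftrightarrow> (\<forall>x y. (\<forall>e. x e \<longrightarrow> y e) \<longrightarrow> f y \<le> f x)"

lemma harris:
  assumes "finite J" "w True + w False = 1"
  shows "incr f \<Longrightarrow> decr g \<Longrightarrow> SW J w (\<lambda>x. f x * g x) \<le> SW J w f * SW J w g"
  using assms(1)
proof (induction J arbitrary: f g rule: finite_induct)
  case empty
  then show ?case by (simp add: SW_def)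
next
  case (insert a J)
  define f1 where "f1 = (\<lambda>y. f (y(a:=True)))"
  define f0 where "f0 = (\<lambda>y. f (y(a:=False)))"
  define g1 where "g1 = (\<lambda>y. g (y(a:=True)))"
  define g0 where "g0 = (\<lambda>y. g (y(a:=False)))"
  have i: "incr f1" "incr f0" using insert.prems(1) unfolding incr_def f1_def f0_def by auto
  have d: "decr g1" "decr g0" using insert.prems(2) unfolding decr_def g1_def g0_def by auto
  have le: "(\<forall>e. (y(a:=False)) e \<longrightarrow> (y(a:=True)) e)" for y :: "'a \<Rightarrow> bool" by auto
  have F: "SW J w f0 \<le> SW J w f1"
    by (rule SW_mono) (use insert.prems(1) le in \<open>auto simp: incr_def f0_def f1_def\<close>)
  have G: "SW J w g1 \<le> SW J w g0"
    by (rule SW_mono) (use insert.prems(2) le in \<open>auto simp: decr_def g0_def g1_def\<close>)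
  have "SW (insert a J) w (\<lambda>x. f x * g x) = w True * SW J w (\<lambda>y. f1 y * g1 y) + w False * SW J w (\<lambda>y. f0 y * g0 y)"
    using insert.hyps by (simp add: SW_insert f1_def f0_def g1_def g0_def)
  also have "\<dots> \<le> w True * (SW J w f1 * SW J w g1) + w False * (SW J w f0 * SW J w g0)"
    by (intro add_mono mult_left_mono insert.IH i d) auto
  also have "\<dots> \<le> (w True * SW J w f1 + w False * SW J w f0) * (w True * SW J w g1 + w False * SW J w g0)"
    by (rule two_point[OF assms(2) F G])
  also have "\<dots> = SW (insert a J) w f * SW (insert a J) w g"
    using insert.hyps by (simp add: SW_insert f1_def f0_def g1_def g0_def)
  finally show ?case .
qed



lemma pps: "product_prob_space (\<lambda>_. measure_pmf p)"
  unfolding product_prob_space_def product_prob_space_axioms_def product_sigma_finite_def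
  by (auto intro: prob_space_imp_sigma_finite prob_space_measure_pmf)

lemma space_PiM_pmf: "space (PiM J (\<lambda>_. measure_pmf p)) = PiE J (\<lambda>_. UNIV)"
  by (simp add: space_PiM)
lemma sets_PiM_pmf_all:
  fixes p :: "bool pmf"
  assumes "finite J" "B \<subseteq> space (PiM J (\<lambda>_. measure_pmf p))"
  shows "B \<in> sets (PiM J (\<lambda>_. measure_pmf p))"
proof -
  have fin: "finite (PiE J (\<lambda>_. UNIV :: bool set))" using assms(1) by (simp add: finite_PiE)
  have sing: "{x} \<in> sets (PiM J (\<lambda>_. measure_pmf p))" if "x \<in> PiE J (\<lambda>_. UNIV)" for x
  proof -
    have e: "{x} = PiE J (\<lambda>j. {x j})" using that by (intro PiE_singleton[symmetric]) (simp add: PiE_iff)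
    show ?thesis unfolding e by (rule sets_PiM_I_finite[OF assms(1)]) simp
  qed
  have B: "B \<subseteq> PiE J (\<lambda>_. UNIV)" using assms(2) by (simp add: space_PiM_pmf)
  have "B = (\<Union>x\<in>B. {x})" by auto
  moreover have "finite B" using B fin by (rule finite_subset)
  moreover have "\<forall>x\<in>B. {x} \<in> sets (PiM J (\<lambda>_. measure_pmf p))" using B sing by blast
  ultimately show ?thesis by (metis sets.finite_UN)
qed
lemma meas_PiM_pmf:
  fixes p :: "bool pmf"
  assumes "finite J"
  shows "(H :: _ \<Rightarrow> ennreal) \<in> borel_measurable (PiM J (\<lambda>_. measure_pmf p))"
  by (rule measurableI) (simp, rule sets_PiM_pmf_all[OF assms], rule Int_lower2)

lemma glue:
  fixes H :: "('e \<Rightarrow> bool) \<Rightarrow> ennreal" and p :: "bool pmf"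
  assumes "finite J" "J \<subseteq> I"
  shows "(\<integral>\<^sup>+\<omega>. H (restrict \<omega> J) \<partial>PiM I (\<lambda>_. measure_pmf p))
       = SW J (\<lambda>b. ennreal (pmf p b)) H"
proof -
  interpret product_prob_space "\<lambda>_. measure_pmf p" I by (rule pps)
  let ?M = "\<lambda>_::'e. measure_pmf p"
  have "(\<integral>\<^sup>+\<omega>. H (restrict \<omega> J) \<partial>PiM I ?M) = (\<integral>\<^sup>+x. H x \<partial>distr (PiM I ?M) (PiM J ?M) (\<lambda>x. restrict x J))"
    apply (rule nn_integral_distr[symmetric])
     apply (rule measurable_restrict_subset[OF assms(2)])
    apply (simp add: meas_PiM_pmf[OF assms(1)])
    done
  also have "\<dots> = (\<integral>\<^sup>+x. H x \<partial>PiM J ?M)"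
    using distr_PiM_restrict_finite[OF assms] by simp
  also have "\<dots> = (\<integral>\<^sup>+x. H x * indicator (PiE J (\<lambda>_. UNIV)) x \<partial>PiM J ?M)"
    by (rule nn_integral_cong) (simp add: space_PiM_pmf)
  also have "\<dots> = (\<Sum>x\<in>PiE J (\<lambda>_. UNIV). H x * emeasure (PiM J ?M) {x})"
    by (rule nn_integral_indicator_finite)
       (auto simp: assms finite_PiE intro!: sets_PiM_pmf_all simp: space_PiM_pmf)
  also have "\<dots> = SW J (\<lambda>b. ennreal (pmf p b)) H"
    unfolding SW_def
  proof (rule sum.cong[OF refl])
    fix x assume x: "x \<in> PiE J (\<lambda>_. UNIV :: bool set)"
    have "{x} = PiE J (\<lambda>j. {x j})" using x by (simp add: PiE_singleton PiE_iff)
    then have "emeasure (PiM J ?M) {x} = (\<Prod>j\<in>J. emeasure (measure_pmf p) {x j})"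
      using assms(1) by (simp add: emeasure_PiM)
    also have "\<dots> = (\<Prod>j\<in>J. ennreal (pmf p (x j)))" by (simp add: emeasure_pmf_single)
    finally show "H x * emeasure (PiM J ?M) {x} = (\<Prod>j\<in>J. ennreal (pmf p (x j))) * H x"
      by (simp add: mult.commute)
  qed
  finally show ?thesis .
qed



lemma path_len_single[simp]: "path_len w [u] = 0"
  by (simp add: path_len_def)

lemma path_len_Cons: "q \<noteq> [] \<Longrightarrow> path_len w (u # q) = w u (hd q) + path_len w q"
  by (cases q) (auto simp: path_len_def)

definition reach :: "(int \<times> int \<Rightarrow> int \<times> int \<Rightarrow> ennreal) \<Rightarrow> int \<times> int \<Rightarrow> int \<times> int \<Rightarrow> ennreal \<Rightarrow> bool" where
  "reach w u v c \<longleftrightarrow> (\<exists>q. q \<noteq> [] \<and> hd q = u \<and> last q = v \<and> path_len w q \<le> c)"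

lemma reach_refl: "reach w u u 0"
  unfolding reach_def by (rule exI[of _ "[u]"]) simp

lemma reach_mono: "reach w u v c \<Longrightarrow> c \<le> c' \<Longrightarrow> reach w u v c'"
  unfolding reach_def using order_trans by blast

lemma reach_cons: "w u x \<le> a \<Longrightarrow> reach w x v c \<Longrightarrow> reach w u v (a + c)"
  unfolding reach_def
proof (elim exE conjE)
  fix q assume h: "w u x \<le> a" "q \<noteq> []" "hd q = x" "last q = v" "path_len w q \<le> c"
  show "\<exists>q. q \<noteq> [] \<and> hd q = u \<and> last q = v \<and> path_len w q \<le> a + c"
    by (rule exI[of _ "u # q"]) (use h in \<open>auto simp: path_len_Cons intro: add_mono\<close>)
qed

lemma shortest_le: "reach w (0,0) (int n, 0) c \<Longrightarrow> shortest w n \<le> c"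
  unfolding reach_def shortest_def by (auto intro: INF_lower2)

lemma perc_w_h:
  assumes "in_strip K (i,j)" "\<omega> (True,i,j)"
  shows "perc_w K \<omega> (i,j) (i+1,j) \<le> 1" "perc_w K \<omega> (i+1,j) (i,j) \<le> 1"
  using assms by (auto simp: perc_w_def in_strip_def)

lemma perc_w_v:
  assumes "- int K \<le> j" "j < int K" "\<omega> (False,i,j)"
  shows "perc_w K \<omega> (i,j) (i,j+1) \<le> 1" "perc_w K \<omega> (i,j+1) (i,j) \<le> 1"
  using assms by (auto simp: perc_w_def in_strip_def)

definition Acond :: "nat \<Rightarrow> nat \<Rightarrow> (bool \<times> int \<times> int \<Rightarrow> bool) \<Rightarrow> bool" where
  "Acond K n \<omega> \<longleftrightarrow> (\<forall>i j. 0 \<le> i \<and> i < int n \<and> - int K \<le> j \<and> j < int K \<longrightarrow>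
       card {e \<in> square_edges i j. \<not> \<omega> e} \<le> 1)"

lemma sq2:
  assumes "Acond K n \<omega>" "0 \<le> i" "i < int n" "- int K \<le> j" "j < int K"
    "e1 \<in> square_edges i j" "e2 \<in> square_edges i j" "e1 \<noteq> e2"
  shows "\<omega> e1 \<or> \<omega> e2"
proof (rule ccontr)
  assume "\<not> (\<omega> e1 \<or> \<omega> e2)"
  then have "{e1, e2} \<subseteq> {e \<in> square_edges i j. \<not> \<omega> e}" using assms by auto
  moreover have "finite {e \<in> square_edges i j. \<not> \<omega> e}" by (simp add: square_edges_def)
  ultimately have "card {e1,e2} \<le> card {e \<in> square_edges i j. \<not> \<omega> e}" by (rule card_mono[rotated])
  moreover have "card {e \<in> square_edges i j. \<not> \<omega> e} \<le> 1" using assms unfolding Acond_def by blast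
  ultimately show False using assms(8) by simp
qed


lemma two_step:
  assumes "w u m \<le> 1" "w m x \<le> 1" "reach w x v c"
  shows "reach w u v (2 + c)"
proof -
  have "reach w u v (1 + (1 + c))" by (rule reach_cons[OF assms(1) reach_cons[OF assms(2) assms(3)]])
  then show ?thesis by (rule reach_mono) (simp add: add.assoc[symmetric] one_add_one)
qed

lemma square_diag:
  assumes A: "Acond K n \<omega>" and i: "0 \<le> i" "i < int n" and j: "- int K \<le> j" "j < int K"
  shows "reach (perc_w K \<omega>) (i+1,j+1) v c \<Longrightarrow> reach (perc_w K \<omega>) (i,j) v (2 + c)"
    and "reach (perc_w K \<omega>) (i,j) v c \<Longrightarrow> reach (perc_w K \<omega>) (i+1,j+1) v (2 + c)"
    and "reach (perc_w K \<omega>) (i,j+1) v c \<Longrightarrow> reach (perc_w K \<omega>) (i+1,j) v (2 + c)"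
    and "reach (perc_w K \<omega>) (i+1,j) v c \<Longrightarrow> reach (perc_w K \<omega>) (i,j+1) v (2 + c)"
proof -
  have s: "in_strip K (i,j)" "in_strip K (i,j+1)" "in_strip K (i+1,j)" "in_strip K (i+1,j+1)"
    using j by (auto simp: in_strip_def)
  have q: "\<omega> e1 \<or> \<omega> e2" if "e1 \<in> square_edges i j" "e2 \<in> square_edges i j" "e1 \<noteq> e2" for e1 e2
    by (rule sq2[OF A i j that])
  have o1: "(\<omega> (True,i,j) \<and> \<omega> (False,i+1,j)) \<or> (\<omega> (False,i,j) \<and> \<omega> (True,i,j+1))"
    using q[of "(True,i,j)" "(False,i,j)"] q[of "(True,i,j)" "(True,i,j+1)"]
      q[of "(False,i+1,j)" "(False,i,j)"] q[of "(False,i+1,j)" "(True,i,j+1)"]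
    by (auto simp: square_edges_def)
  have o2: "(\<omega> (True,i,j) \<and> \<omega> (False,i,j)) \<or> (\<omega> (False,i+1,j) \<and> \<omega> (True,i,j+1))"
    using q[of "(True,i,j)" "(False,i+1,j)"] q[of "(True,i,j)" "(True,i,j+1)"]
      q[of "(False,i,j)" "(False,i+1,j)"] q[of "(False,i,j)" "(True,i,j+1)"]
    by (auto simp: square_edges_def)
  show "reach (perc_w K \<omega>) (i,j) v (2 + c)" if r: "reach (perc_w K \<omega>) (i+1,j+1) v c"
    using o1 proof
    assume h: "\<omega> (True,i,j) \<and> \<omega> (False,i+1,j)"
    show ?thesis by (rule two_step[OF perc_w_h(1)[OF s(1)] perc_w_v(1)[OF j] r]) (use h in auto)
  next
    assume h: "\<omega> (False,i,j) \<and> \<omega> (True,i,j+1)"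
    show ?thesis by (rule two_step[OF perc_w_v(1)[OF j] perc_w_h(1)[OF s(2)] r]) (use h in auto)
  qed
  show "reach (perc_w K \<omega>) (i+1,j+1) v (2 + c)" if r: "reach (perc_w K \<omega>) (i,j) v c"
    using o1 proof
    assume h: "\<omega> (True,i,j) \<and> \<omega> (False,i+1,j)"
    show ?thesis by (rule two_step[OF perc_w_v(2)[OF j] perc_w_h(2)[OF s(1)] r]) (use h in auto)
  next
    assume h: "\<omega> (False,i,j) \<and> \<omega> (True,i,j+1)"
    show ?thesis by (rule two_step[OF perc_w_h(2)[OF s(2)] perc_w_v(2)[OF j] r]) (use h in auto)
  qed
  show "reach (perc_w K \<omega>) (i+1,j) v (2 + c)" if r: "reach (perc_w K \<omega>) (i,j+1) v c"
    using o2 proof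
    assume h: "\<omega> (True,i,j) \<and> \<omega> (False,i,j)"
    show ?thesis by (rule two_step[OF perc_w_h(2)[OF s(1)] perc_w_v(1)[OF j] r]) (use h in auto)
  next
    assume h: "\<omega> (False,i+1,j) \<and> \<omega> (True,i,j+1)"
    show ?thesis by (rule two_step[OF perc_w_v(1)[OF j] perc_w_h(2)[OF s(2)] r]) (use h in auto)
  qed
  show "reach (perc_w K \<omega>) (i,j+1) v (2 + c)" if r: "reach (perc_w K \<omega>) (i+1,j) v c"
    using o2 proof
    assume h: "\<omega> (True,i,j) \<and> \<omega> (False,i,j)"
    show ?thesis by (rule two_step[OF perc_w_v(2)[OF j] perc_w_h(1)[OF s(1)] r]) (use h in auto)
  next
    assume h: "\<omega> (False,i+1,j) \<and> \<omega> (True,i,j+1)"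
    show ?thesis by (rule two_step[OF perc_w_h(1)[OF s(2)] perc_w_v(2)[OF j] r]) (use h in auto)
  qed
qed


lemma diag:
  assumes A: "Acond K n \<omega>" and a: "0 \<le> a" "a \<le> int n" "0 \<le> a'" "a' \<le> int n" "\<bar>a - a'\<bar> = 1"
    and r: "- int K \<le> r" "r \<le> int K" "- int K \<le> r'" "r' \<le> int K" "\<bar>r - r'\<bar> = 1"
    and R: "reach (perc_w K \<omega>) (a',r') v c"
  shows "reach (perc_w K \<omega>) (a,r) v (2 + c)"
proof -
  consider "a' = a + 1" | "a' = a - 1" using a(5) by linarith
  then show ?thesis
  proof cases
    case 1
    consider "r' = r + 1" | "r' = r - 1" using r(5) by linarith
    then show ?thesis
    proof cases
      case 11: 1
      show ?thesis using square_diag(1)[OF A, of a r v c] R 1 11 a r by auto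
    next
      case 12: 2
      have "reach (perc_w K \<omega>) (a, (r-1)+1) v (2 + c)"
        by (rule square_diag(4)[OF A]) (use R 1 12 a r in auto)
      then show ?thesis by simp
    qed
  next
    case 2
    consider "r' = r + 1" | "r' = r - 1" using r(5) by linarith
    then show ?thesis
    proof cases
      case 21: 1
      have "reach (perc_w K \<omega>) ((a-1)+1, r) v (2 + c)"
        by (rule square_diag(3)[OF A]) (use R 2 21 a r in auto)
      then show ?thesis by simp
    next
      case 22: 2
      have "reach (perc_w K \<omega>) ((a-1)+1, (r-1)+1) v (2 + c)"
        by (rule square_diag(2)[OF A]) (use R 2 22 a r in auto)
      then show ?thesis by simp
    qed
  qed
qed

lemma vstep:
  assumes A: "Acond K n \<omega>" and n: "n \<ge> 1" and i: "0 \<le> i" "i \<le> int n" and j: "- int K \<le> j" "j < int K"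
  shows "reach (perc_w K \<omega>) (i,j+1) v c \<Longrightarrow> reach (perc_w K \<omega>) (i,j) v (3 + c)"
    and "reach (perc_w K \<omega>) (i,j) v c \<Longrightarrow> reach (perc_w K \<omega>) (i,j+1) v (3 + c)"
proof -
  have s: "in_strip K (i,j)" "in_strip K (i,j+1)" "in_strip K (i-1,j)" "in_strip K (i-1,j+1)"
    using j by (auto simp: in_strip_def)
  have c3: "(1::ennreal) + (1 + (1 + c)) = 3 + c"
    by (simp add: add.assoc[symmetric])
  have c1: "(1::ennreal) + c \<le> 3 + c" by (intro add_right_mono) simp
  show "reach (perc_w K \<omega>) (i,j) v (3 + c)" if r: "reach (perc_w K \<omega>) (i,j+1) v c"
  proof (cases "\<omega> (False,i,j)")
    case True
    show ?thesis by (rule reach_mono[OF reach_cons[OF perc_w_v(1)[where \<omega>=\<omega>, OF j True] r] c1])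
  next
    case False
    show ?thesis
    proof (cases "i < int n")
      case True
      have q: "\<omega> e1 \<or> \<omega> e2" if "e1 \<in> square_edges i j" "e2 \<in> square_edges i j" "e1 \<noteq> e2" for e1 e2
        by (rule sq2[OF A i(1) True j that])
      have o: "\<omega> (True,i,j)" "\<omega> (False,i+1,j)" "\<omega> (True,i,j+1)"
        using q[of "(False,i,j)" "(True,i,j)"] q[of "(False,i,j)" "(False,i+1,j)"] q[of "(False,i,j)" "(True,i,j+1)"]
          False by (auto simp: square_edges_def)
      have "reach (perc_w K \<omega>) (i,j) v (1 + (1 + (1 + c)))"
        by (rule reach_cons[OF perc_w_h(1)[where \<omega>=\<omega>, OF s(1) o(1)] reach_cons[OF perc_w_v(1)[where \<omega>=\<omega>, OF j o(2)]
              reach_cons[OF perc_w_h(2)[where \<omega>=\<omega>, OF s(2) o(3)] r]]])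
      then show ?thesis unfolding c3 .
    next
      case False': False
      then have ii: "i - 1 < int n" "0 \<le> i - 1" "i = (i - 1) + 1" using n i by auto
      have q: "\<omega> e1 \<or> \<omega> e2" if "e1 \<in> square_edges (i-1) j" "e2 \<in> square_edges (i-1) j" "e1 \<noteq> e2" for e1 e2
        by (rule sq2[OF A ii(2) ii(1) j that])
      have o: "\<omega> (True,i-1,j)" "\<omega> (False,i-1,j)" "\<omega> (True,i-1,j+1)"
        using q[of "(False,i,j)" "(True,i-1,j)"] q[of "(False,i,j)" "(False,i-1,j)"] q[of "(False,i,j)" "(True,i-1,j+1)"]
          False by (auto simp: square_edges_def)
      have e1: "perc_w K \<omega> (i,j) (i-1,j) \<le> 1" using perc_w_h(2)[where \<omega>=\<omega>, OF s(3) o(1)] by simp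
      have e3: "perc_w K \<omega> (i-1,j+1) (i,j+1) \<le> 1" using perc_w_h(1)[where \<omega>=\<omega>, OF s(4) o(3)] by simp
      have "reach (perc_w K \<omega>) (i,j) v (1 + (1 + (1 + c)))"
        by (rule reach_cons[OF e1 reach_cons[OF perc_w_v(1)[where \<omega>=\<omega>, OF j o(2)] reach_cons[OF e3 r]]])
      then show ?thesis unfolding c3 .
    qed
  qed
  show "reach (perc_w K \<omega>) (i,j+1) v (3 + c)" if r: "reach (perc_w K \<omega>) (i,j) v c"
  proof (cases "\<omega> (False,i,j)")
    case True
    show ?thesis by (rule reach_mono[OF reach_cons[OF perc_w_v(2)[where \<omega>=\<omega>, OF j True] r] c1])
  next
    case False
    show ?thesis
    proof (cases "i < int n")
      case True
      have q: "\<omega> e1 \<or> \<omega> e2" if "e1 \<in> square_edges i j" "e2 \<in> square_edges i j" "e1 \<noteq> e2" for e1 e2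
        by (rule sq2[OF A i(1) True j that])
      have o: "\<omega> (True,i,j)" "\<omega> (False,i+1,j)" "\<omega> (True,i,j+1)"
        using q[of "(False,i,j)" "(True,i,j)"] q[of "(False,i,j)" "(False,i+1,j)"] q[of "(False,i,j)" "(True,i,j+1)"]
          False by (auto simp: square_edges_def)
      have "reach (perc_w K \<omega>) (i,j+1) v (1 + (1 + (1 + c)))"
        by (rule reach_cons[OF perc_w_h(1)[where \<omega>=\<omega>, OF s(2) o(3)] reach_cons[OF perc_w_v(2)[where \<omega>=\<omega>, OF j o(2)]
              reach_cons[OF perc_w_h(2)[where \<omega>=\<omega>, OF s(1) o(1)] r]]])
      then show ?thesis unfolding c3 .
    next
      case False': False
      then have ii: "i - 1 < int n" "0 \<le> i - 1" "i = (i - 1) + 1" using n i by auto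
      have q: "\<omega> e1 \<or> \<omega> e2" if "e1 \<in> square_edges (i-1) j" "e2 \<in> square_edges (i-1) j" "e1 \<noteq> e2" for e1 e2
        by (rule sq2[OF A ii(2) ii(1) j that])
      have o: "\<omega> (True,i-1,j)" "\<omega> (False,i-1,j)" "\<omega> (True,i-1,j+1)"
        using q[of "(False,i,j)" "(True,i-1,j)"] q[of "(False,i,j)" "(False,i-1,j)"] q[of "(False,i,j)" "(True,i-1,j+1)"]
          False by (auto simp: square_edges_def)
      have e1: "perc_w K \<omega> (i,j+1) (i-1,j+1) \<le> 1" using perc_w_h(2)[where \<omega>=\<omega>, OF s(4) o(3)] by simp
      have e3: "perc_w K \<omega> (i-1,j) (i,j) \<le> 1" using perc_w_h(1)[where \<omega>=\<omega>, OF s(3) o(1)] by simp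
      have "reach (perc_w K \<omega>) (i,j+1) v (1 + (1 + (1 + c)))"
        by (rule reach_cons[OF e1 reach_cons[OF perc_w_v(2)[where \<omega>=\<omega>, OF j o(2)] reach_cons[OF e3 r]]])
      then show ?thesis unfolding c3 .
    qed
  qed
qed

lemma arith1:
  fixes c L :: ennreal and t X S Y :: nat
  assumes "c + of_nat Y \<le> L" "t + X \<le> S + Y"
  shows "(of_nat t + c) + of_nat X \<le> of_nat S + L"
proof -
  have "(of_nat t + c) + of_nat X = c + of_nat (t + X)" by (simp add: algebra_simps)
  also have "\<dots> \<le> c + of_nat (S + Y)" using assms(2) by (intro add_left_mono) (metis of_nat_mono)
  also have "\<dots> = of_nat S + (c + of_nat Y)" by (simp add: algebra_simps)
  also have "\<dots> \<le> of_nat S + L" using assms(1) by (intro add_left_mono)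
  finally show ?thesis .
qed

lemma vrun_pos:
  assumes A: "Acond K n \<omega>" and n: "n \<ge> 1" and i: "0 \<le> i" "i \<le> int n"
  shows "reach (perc_w K \<omega>) (i, int m) v c \<Longrightarrow> int m \<le> int K \<Longrightarrow> reach (perc_w K \<omega>) (i,0) v (c + 3 * of_nat m)"
proof (induction m arbitrary: c)
  case 0 then show ?case by simp
next
  case (Suc m)
  have "reach (perc_w K \<omega>) (i, int m) v (3 + c)"
    by (rule vstep(1)[OF A n i]) (use Suc.prems in \<open>auto simp: add.commute\<close>)
  then have "reach (perc_w K \<omega>) (i,0) v ((3 + c) + 3 * of_nat m)"
    using Suc by auto
  then show ?case by (simp add: algebra_simps)
qed

lemma vrun_neg:
  assumes A: "Acond K n \<omega>" and n: "n \<ge> 1" and i: "0 \<le> i" "i \<le> int n"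
  shows "reach (perc_w K \<omega>) (i, - int m) v c \<Longrightarrow> int m \<le> int K \<Longrightarrow> reach (perc_w K \<omega>) (i,0) v (c + 3 * of_nat m)"
proof (induction m arbitrary: c)
  case 0 then show ?case by simp
next
  case (Suc m)
  have "reach (perc_w K \<omega>) (i, - int (Suc m) + 1) v (3 + c)"
    by (rule vstep(2)[OF A n i]) (use Suc.prems in auto)
  then have "reach (perc_w K \<omega>) (i, - int m) v (3 + c)" by simp
  then have "reach (perc_w K \<omega>) (i,0) v ((3 + c) + 3 * of_nat m)"
    using Suc by auto
  then show ?case by (simp add: algebra_simps)
qed

lemma vrun:
  assumes A: "Acond K n \<omega>" and n: "n \<ge> 1" and i: "0 \<le> i" "i \<le> int n"
    and r: "reach (perc_w K \<omega>) (i, j) v c" and j: "- int K \<le> j" "j \<le> int K"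
  shows "reach (perc_w K \<omega>) (i,0) v (c + 3 * of_nat (nat \<bar>j\<bar>))"
proof (cases "j \<ge> 0")
  case True
  define m where "m = nat j"
  have jm: "j = int m" "nat \<bar>j\<bar> = m" using True by (auto simp: m_def)
  show ?thesis unfolding jm(2) by (rule vrun_pos[OF A n i]) (use r j jm in auto)
next
  case False
  define m where "m = nat (- j)"
  have jm: "j = - int m" "nat \<bar>j\<bar> = m" using False by (auto simp: m_def)
  show ?thesis unfolding jm(2) by (rule vrun_neg[OF A n i]) (use r j jm in auto)
qed

lemma cross_cases:
  assumes "cross_w K \<omega> u w \<noteq> \<top>"
  shows "in_strip K u \<and> in_strip K w \<and> 1 \<le> cross_w K \<omega> u w \<and>
    ((fst w = fst u + 1 \<and> snd w = snd u \<and> \<omega> (True, fst u, snd u) \<and> cross_w K \<omega> u w = 1) \<or>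
     (fst u = fst w + 1 \<and> snd w = snd u \<and> \<omega> (True, fst w, snd w) \<and> cross_w K \<omega> u w = 1) \<or>
     (fst w = fst u \<and> \<bar>snd w - snd u\<bar> = 1) \<or>
     (\<bar>fst w - fst u\<bar> = 1 \<and> \<bar>snd w - snd u\<bar> = 1 \<and> cross_w K \<omega> u w = 2))"
  using assms by (cases u; cases w) (auto simp: cross_w_def split: if_splits)

definition clamp :: "nat \<Rightarrow> int \<Rightarrow> int" where
  "clamp n a = max 0 (min (int n) a)"


lemma hj1: "(j''::int) \<noteq> b \<Longrightarrow> j' = (if j'' > b then j'' - 1 else j'' + 1) \<Longrightarrow> 2 + nat \<bar>j' - b\<bar> \<le> 1 + nat \<bar>j'' - b\<bar>"
  by (cases "j'' > b") auto
lemma hj2: "(j''::int) \<noteq> b \<Longrightarrow> - int K \<le> b \<Longrightarrow> b \<le> int K \<Longrightarrow> - int K \<le> j'' \<Longrightarrow> j'' \<le> int K \<Longrightarrow> j' = (if j'' > b then j'' - 1 else j'' + 1) \<Longrightarrow> - int K \<le> j' \<and> j' \<le> int K \<and> \<bar>j' - j''\<bar> = 1"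
  by (cases "j'' > b") auto
lemma hj3: "\<bar>e::int\<bar> = 1 \<Longrightarrow> - int K \<le> b \<Longrightarrow> b \<le> int K \<Longrightarrow> - int K \<le> j'' \<Longrightarrow> j'' \<le> int K \<Longrightarrow> K \<ge> 1 \<Longrightarrow> b' = b + e \<Longrightarrow>
  j' = (if - int K \<le> j'' - e \<and> j'' - e \<le> int K then j'' - e else j'' + e) \<Longrightarrow>
  - int K \<le> j' \<and> j' \<le> int K \<and> \<bar>j' - j''\<bar> = 1 \<and> 2 + nat \<bar>j' - b\<bar> \<le> 2 + nat \<bar>j'' - b'\<bar>"
  by (cases "- int K \<le> j'' - e \<and> j'' - e \<le> int K"; cases "e = 1") auto

lemma M:
  assumes A: "Acond K n \<omega>" and n: "n \<ge> 1" and K: "K \<ge> 1"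
    and v: "0 \<le> fst v" "fst v \<le> int n" "in_strip K v"
  shows "p \<noteq> [] \<Longrightarrow> last p = v \<Longrightarrow> path_len (cross_w K \<omega>) p < \<top> \<Longrightarrow>
    \<exists>j' c. - int K \<le> j' \<and> j' \<le> int K \<and> reach (perc_w K \<omega>) (clamp n (fst (hd p)), j') v c \<and>
      c + of_nat (nat \<bar>j' - snd (hd p)\<bar>) \<le> path_len (cross_w K \<omega>) p"
proof (induction p)
  case Nil then show ?case by simp
next
  case (Cons u p')
  show ?case
  proof (cases "p' = []")
    case True
    then have uv: "u = v" using Cons.prems by simp
    have cl: "clamp n (fst v) = fst v" using v by (simp add: clamp_def)
    have "reach (perc_w K \<omega>) (clamp n (fst v), snd v) v 0" unfolding cl by (simp add: reach_refl)
    then show ?thesis using uv True v by (intro exI[of _ "snd v"] exI[of _ 0]) (auto simp: in_strip_def)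
  next
    case False
    define w where "w = hd p'"
    define S where "S = cross_w K \<omega> u w"
    define Lp where "Lp = path_len (cross_w K \<omega>) p'"
    have L: "path_len (cross_w K \<omega>) (u # p') = S + Lp"
      using False by (simp add: path_len_Cons w_def S_def Lp_def)
    have fin: "S \<noteq> \<top>" "Lp < \<top>" using Cons.prems(3) unfolding L by (auto simp: top_unique)
    obtain j'' c'' where IH: "- int K \<le> j''" "j'' \<le> int K" "reach (perc_w K \<omega>) (clamp n (fst w), j'') v c''"
      "c'' + of_nat (nat \<bar>j'' - snd w\<bar>) \<le> Lp"
      using Cons.IH[OF False _ fin(2)[unfolded Lp_def]] Cons.prems(2) False unfolding w_def Lp_def by auto
    obtain a b where u: "u = (a,b)" by (cases u)
    obtain a' b' where w: "w = (a',b')" by (cases w)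
    have Sab: "S = cross_w K \<omega> (a,b) (a',b')" using S_def u w by simp
    have cc: "in_strip K (a,b) \<and> in_strip K (a',b') \<and> 1 \<le> S \<and>
    ((a' = a + 1 \<and> b' = b \<and> \<omega> (True, a, b) \<and> S = 1) \<or>
     (a = a' + 1 \<and> b' = b \<and> \<omega> (True, a', b') \<and> S = 1) \<or>
     (a' = a \<and> \<bar>b' - b\<bar> = 1) \<or>
     (\<bar>a' - a\<bar> = 1 \<and> \<bar>b' - b\<bar> = 1 \<and> S = 2))"
      using cross_cases[OF fin(1)[unfolded S_def]] unfolding Sab u w by simp
    have S1: "1 \<le> S" using cc by blast
    have sb: "- int K \<le> b" "b \<le> int K" "- int K \<le> b'" "b' \<le> int K" using cc by (auto simp: in_strip_def)
    have ex: "\<exists>j' c. - int K \<le> j' \<and> j' \<le> int K \<and> reach (perc_w K \<omega>) (clamp n a, j') v c \<and>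
      c + of_nat (nat \<bar>j' - b\<bar>) \<le> S + Lp"
    proof (cases "clamp n a = clamp n a'")
      case True
      have bb: "\<bar>b' - b\<bar> \<le> 1" using cc by linarith
      have "(of_nat 0 + c'') + of_nat (nat \<bar>j'' - b\<bar>) \<le> of_nat 1 + Lp"
        by (rule arith1[OF IH(4)[unfolded w snd_conv]]) (use bb in linarith)
      then have "c'' + of_nat (nat \<bar>j'' - b\<bar>) \<le> S + Lp" using S1
        by (simp add: add_right_mono order_trans)
      then show ?thesis using IH(1-3) True w by auto
    next
      case False
      have aa: "a \<noteq> a'" using False by auto
      have ab: "\<bar>a' - a\<bar> = 1" using cc aa by linarith
      have a_rng: "0 \<le> a" "a \<le> int n" "0 \<le> a'" "a' \<le> int n" "clamp n a = a" "clamp n a' = a'"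
        using False ab by (auto simp: clamp_def)
      have R: "reach (perc_w K \<omega>) (a', j'') v c''" using IH(3) w a_rng by simp
      have ineq: "c'' + of_nat (nat \<bar>j'' - b'\<bar>) \<le> Lp" using IH(4) w by simp
      consider (H) "b' = b" "S = 1" "(a' = a + 1 \<and> \<omega> (True,a,b)) \<or> (a = a' + 1 \<and> \<omega> (True,a',b))"
        | (D) "\<bar>b' - b\<bar> = 1" "S = 2"
        using cc aa by blast
      then show ?thesis
      proof cases
        case H
        show ?thesis
        proof (cases "j'' = b")
          case True
          have st: "in_strip K (a,b)" "in_strip K (a',b')" using cc by blast+
          have e: "perc_w K \<omega> (a,b) (a',b) \<le> 1"
            using H(3)
          proof
            assume h: "a' = a + 1 \<and> \<omega> (True, a, b)"
            show ?thesis using perc_w_h(1)[of K a b \<omega>, OF st(1)] h by simp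
          next
            assume h: "a = a' + 1 \<and> \<omega> (True, a', b)"
            show ?thesis using perc_w_h(2)[of K a' b \<omega>] st(2) h H(1) by simp
          qed
          have r: "reach (perc_w K \<omega>) (a,b) v (1 + c'')" by (rule reach_cons[where w="perc_w K \<omega>", OF e]) (use R True in simp)
          have "(of_nat 1 + c'') + of_nat (nat \<bar>b - b\<bar>) \<le> of_nat 1 + Lp"
            by (rule arith1[OF ineq]) (use True H in simp)
          then have "(1 + c'') + of_nat (nat \<bar>b - b\<bar>) \<le> S + Lp" using H by simp
          then show ?thesis by (intro exI[of _ b] exI[of _ "1 + c''"]) (use r sb a_rng(5) in simp)
        next
          case False
          define j' where "j' = (if j'' > b then j'' - 1 else j'' + 1)"
          have j'r: "- int K \<le> j'" "j' \<le> int K" "\<bar>j' - j''\<bar> = 1"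
            using hj2[OF False sb(1,2) IH(1,2) j'_def] by auto
          have r: "reach (perc_w K \<omega>) (a,j') v (2 + c'')"
            by (rule diag[OF A a_rng(1-4) _ j'r(1,2) IH(1,2) _ R]) (use ab j'r in auto)
          have "(of_nat 2 + c'') + of_nat (nat \<bar>j' - b\<bar>) \<le> of_nat 1 + Lp"
            by (rule arith1[OF ineq]) (use hj1[OF False j'_def] H(1) in simp)
          then have "(2 + c'') + of_nat (nat \<bar>j' - b\<bar>) \<le> S + Lp" using H by simp
          then show ?thesis by (intro exI[of _ j'] exI[of _ "2 + c''"]) (use r j'r a_rng(5) in simp)
        qed
      next
        case D
        define e where "e = b' - b"
        define j' where "j' = (if - int K \<le> j'' - e \<and> j'' - e \<le> int K then j'' - e else j'' + e)"
        have eabs: "\<bar>e\<bar> = 1" using D by (simp add: e_def)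
        have bbe: "b' = b + e" by (simp add: e_def)
        note H3 = hj3[OF eabs sb(1,2) IH(1,2) K bbe j'_def]
        have j'r: "- int K \<le> j'" "j' \<le> int K" "\<bar>j' - j''\<bar> = 1" using H3 by auto
        have r: "reach (perc_w K \<omega>) (a,j') v (2 + c'')"
          by (rule diag[OF A a_rng(1-4) _ j'r(1,2) IH(1,2) _ R]) (use ab j'r in auto)
        have "(of_nat 2 + c'') + of_nat (nat \<bar>j' - b\<bar>) \<le> of_nat 2 + Lp"
          by (rule arith1[OF ineq]) (use H3 in simp)
        then have "(2 + c'') + of_nat (nat \<bar>j' - b\<bar>) \<le> S + Lp" using D by simp
        then show ?thesis by (intro exI[of _ j'] exI[of _ "2 + c''"]) (use r j'r a_rng(5) in simp)
      qed
    qed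
    then show ?thesis using L u by simp
  qed
qed

lemma INF_add_c:
  fixes f :: "'a \<Rightarrow> ennreal"
  assumes "S \<noteq> {}"
  shows "(INF p\<in>S. f p) + c = (INF p\<in>S. f p + c)"
  using continuous_at_Inf_mono[of "\<lambda>x. x + c" "f`S"]
  using continuous_add[of "at_right (Inf (f`S))", of "\<lambda>x. x" "\<lambda>x. c"] assms
  by (auto simp: mono_def image_comp)

lemma perc_le_cross:
  assumes A: "Acond K n \<omega>" and K: "K \<ge> 1"
  shows "perc_dist K n \<omega> \<le> cross_dist K n \<omega> + 3 * of_nat K"
proof (cases "n = 0")
  case True
  have "perc_dist K n \<omega> \<le> 0" unfolding perc_dist_def
    by (rule shortest_le) (use True in \<open>simp add: reach_refl\<close>)
  then show ?thesis by simp
next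
  case False
  then have n: "n \<ge> 1" by simp
  define P where "P = {p :: (int \<times> int) list. p \<noteq> [] \<and> hd p = (0, 0) \<and> last p = (int n, 0)}"
  have "[(0,0),(int n,0)] \<in> P" by (simp add: P_def)
  then have Pne: "P \<noteq> {}" by blast
  have *: "perc_dist K n \<omega> \<le> path_len (cross_w K \<omega>) p + 3 * of_nat K" if p: "p \<in> P" for p
  proof (cases "path_len (cross_w K \<omega>) p < \<top>")
    case False
    then have "path_len (cross_w K \<omega>) p = \<top>" using top.not_eq_extremum by blast
    then show ?thesis by simp
  next
    case True
    have v: "0 \<le> fst (int n, 0::int)" "fst (int n, 0::int) \<le> int n" "in_strip K (int n, 0)"
      by (auto simp: in_strip_def)
    obtain j' c where j: "- int K \<le> j'" "j' \<le> int K"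
      and r: "reach (perc_w K \<omega>) (clamp n (fst (hd p)), j') (int n, 0) c"
      and le: "c + of_nat (nat \<bar>j' - snd (hd p)\<bar>) \<le> path_len (cross_w K \<omega>) p"
      using M[OF A n K v, of p] p True unfolding P_def by auto
    have hp: "hd p = (0,0)" using p by (simp add: P_def)
    have r0: "reach (perc_w K \<omega>) (0, j') (int n, 0) c" using r hp by (simp add: clamp_def)
    have r1: "reach (perc_w K \<omega>) (0, 0) (int n, 0) (c + 3 * of_nat (nat \<bar>j'\<bar>))"
      by (rule vrun[OF A n _ _ r0 j]) auto
    have "perc_dist K n \<omega> \<le> c + 3 * of_nat (nat \<bar>j'\<bar>)"
      unfolding perc_dist_def by (rule shortest_le[OF r1])
    also have "\<dots> = (c + of_nat (nat \<bar>j'\<bar>)) + 2 * of_nat (nat \<bar>j'\<bar>)"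
    proof -
      have e3: "(3::ennreal) * x = x + 2 * x" for x
      proof -
        have "(3::ennreal) * x = (1 + 2) * x" by simp
        also have "\<dots> = x + 2 * x" by (simp only: distrib_right mult_1)
        finally show ?thesis .
      qed
      show ?thesis by (simp add: e3 add.assoc)
    qed
    also have "\<dots> \<le> path_len (cross_w K \<omega>) p + 2 * of_nat K"
    proof (rule add_mono)
      show "c + of_nat (nat \<bar>j'\<bar>) \<le> path_len (cross_w K \<omega>) p" using le hp by simp
      have "nat \<bar>j'\<bar> \<le> K" using j by linarith
      then have "(of_nat (nat \<bar>j'\<bar>) :: ennreal) \<le> of_nat K" by (metis of_nat_mono)
      then show "2 * (of_nat (nat \<bar>j'\<bar>) :: ennreal) \<le> 2 * of_nat K" by (rule mult_left_mono) simp
    qed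
    also have "\<dots> \<le> path_len (cross_w K \<omega>) p + 3 * of_nat K"
      by (intro add_left_mono mult_right_mono) auto
    finally show ?thesis .
  qed
  have "perc_dist K n \<omega> \<le> (INF p\<in>P. path_len (cross_w K \<omega>) p + 3 * of_nat K)"
    by (rule INF_greatest) (rule *)
  also have "\<dots> = cross_dist K n \<omega> + 3 * of_nat K"
    unfolding cross_dist_def shortest_def P_def[symmetric] by (rule INF_add_c[OF Pne, symmetric])
  finally show ?thesis .
qed


definition Eset :: "nat \<Rightarrow> nat \<Rightarrow> (bool \<times> int \<times> int) set" where
  "Eset K n = (\<lambda>(i,j). (True,i,j)) ` ({0..<int n} \<times> {- int K..int K})"

definition Vset :: "nat \<Rightarrow> nat \<Rightarrow> (bool \<times> int \<times> int) set" where
  "Vset K n = (\<lambda>(i,j). (False,i,j)) ` ({0..int n} \<times> {- int K..<int K})"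

lemma Eset_mem: "(True,i,j) \<in> Eset K n \<longleftrightarrow> 0 \<le> i \<and> i < int n \<and> - int K \<le> j \<and> j \<le> int K"
  unfolding Eset_def by auto

lemma Vset_mem: "(False,i,j) \<in> Vset K n \<longleftrightarrow> 0 \<le> i \<and> i \<le> int n \<and> - int K \<le> j \<and> j < int K"
  unfolding Vset_def by auto

lemma cross_w_local:
  assumes ag: "\<forall>e\<in>Eset K n. \<omega> e = \<omega>' e"
    and u: "0 \<le> a" "a \<le> int n" and w: "0 \<le> a'" "a' \<le> int n"
  shows "cross_w K \<omega> (a,b) (a',b') = cross_w K \<omega>' (a,b) (a',b')"
proof -
  define C where "C = (\<lambda>\<omega>. in_strip K (a,b) \<and> in_strip K (a',b') \<and>
         (((a',b') = (a + 1, b) \<and> \<omega> (True, a, b)) \<or>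
          ((a,b) = (a' + 1, b') \<and> \<omega> (True, a', b')) \<or>
          (a',b') = (a, b + 1) \<or> (a,b) = (a', b' + 1)))"
  define D where "D = (in_strip K (a,b) \<and> in_strip K (a',b') \<and>
         (\<bar>a' - a\<bar> = 1 \<and> \<bar>b' - b\<bar> = 1))"
  have ex: "cross_w K \<omega>'' (a,b) (a',b') = (if C \<omega>'' then 1 else if D then 2 else \<top>)" for \<omega>''
    unfolding cross_w_def C_def D_def fst_conv snd_conv by (rule refl)
  have e1: "in_strip K (a,b) \<Longrightarrow> a' = a + 1 \<Longrightarrow> \<omega> (True,a,b) = \<omega>' (True,a,b)"
    using ag u w by (auto simp: Eset_mem in_strip_def)
  have e2: "in_strip K (a',b') \<Longrightarrow> a = a' + 1 \<Longrightarrow> \<omega> (True,a',b') = \<omega>' (True,a',b')"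
    using ag u w by (auto simp: Eset_mem in_strip_def)
  have "C \<omega> = C \<omega>'" unfolding C_def using e1 e2 by auto
  then show ?thesis unfolding ex by simp
qed

lemma cross_w_vert:
  assumes "in_strip K (i,b)" "in_strip K (i,b')" "\<bar>b - b'\<bar> = 1"
  shows "cross_w K \<omega> (i,b) (i,b') \<le> 1"
proof -
  have "b' = b + 1 \<or> b = b' + 1" using assms(3) by linarith
  then show ?thesis using assms by (auto simp: cross_w_def)
qed

lemma MC:
  assumes ag: "\<forall>e\<in>Eset K n. \<omega> e = \<omega>' e"
    and v: "0 \<le> fst v" "fst v \<le> int n" "in_strip K v"
  shows "p \<noteq> [] \<Longrightarrow> last p = v \<Longrightarrow> path_len (cross_w K \<omega>') p < \<top> \<Longrightarrow>
    reach (cross_w K \<omega>) (clamp n (fst (hd p)), snd (hd p)) v (path_len (cross_w K \<omega>') p)"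
proof (induction p)
  case Nil then show ?case by simp
next
  case (Cons u p')
  show ?case
  proof (cases "p' = []")
    case True
    then have uv: "u = v" using Cons.prems by simp
    have cl: "clamp n (fst v) = fst v" using v by (simp add: clamp_def)
    show ?thesis using uv True cl by (simp add: reach_refl)
  next
    case False
    define w where "w = hd p'"
    define S where "S = cross_w K \<omega>' u w"
    define Lp where "Lp = path_len (cross_w K \<omega>') p'"
    have L: "path_len (cross_w K \<omega>') (u # p') = S + Lp"
      using False by (simp add: path_len_Cons w_def S_def Lp_def)
    have fin: "S \<noteq> \<top>" "Lp < \<top>" using Cons.prems(3) unfolding L by (auto simp: top_unique)
    have IH: "reach (cross_w K \<omega>) (clamp n (fst w), snd w) v Lp"
      using Cons.IH[OF False _ fin(2)[unfolded Lp_def]] Cons.prems(2) False unfolding w_def Lp_def by auto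
    obtain a b where u: "u = (a,b)" by (cases u)
    obtain a' b' where w: "w = (a',b')" by (cases w)
    have Sab: "S = cross_w K \<omega>' (a,b) (a',b')" using S_def u w by simp
    have cc: "in_strip K (a,b) \<and> in_strip K (a',b') \<and> 1 \<le> S \<and>
    ((a' = a + 1 \<and> b' = b \<and> \<omega>' (True, a, b) \<and> S = 1) \<or>
     (a = a' + 1 \<and> b' = b \<and> \<omega>' (True, a', b') \<and> S = 1) \<or>
     (a' = a \<and> \<bar>b' - b\<bar> = 1) \<or>
     (\<bar>a' - a\<bar> = 1 \<and> \<bar>b' - b\<bar> = 1 \<and> S = 2))"
      using cross_cases[OF fin(1)[unfolded S_def]] unfolding Sab u w by simp
    have S1: "1 \<le> S" using cc by blast
    have R: "reach (cross_w K \<omega>) (clamp n a', b') v Lp" using IH w by simp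
    have ex: "reach (cross_w K \<omega>) (clamp n a, b) v (S + Lp)"
    proof (cases "clamp n a = clamp n a'")
      case True
      show ?thesis
      proof (cases "b = b'")
        case True
        have "reach (cross_w K \<omega>) (clamp n a, b) v Lp" using R True \<open>clamp n a = clamp n a'\<close> by simp
        then show ?thesis by (rule reach_mono) (simp add: add_increasing)
      next
        case False
        have bb: "\<bar>b - b'\<bar> = 1" using cc False by linarith
        have st: "in_strip K (clamp n a, b)" "in_strip K (clamp n a, b')" using cc by (auto simp: in_strip_def)
        have "reach (cross_w K \<omega>) (clamp n a, b) v (1 + Lp)"
          by (rule reach_cons[where w="cross_w K \<omega>", OF cross_w_vert[where \<omega>=\<omega>, OF st bb]]) (use R True in simp)
        then show ?thesis by (rule reach_mono) (simp add: S1 add_right_mono)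
      qed
    next
      case False
      have aa: "a \<noteq> a'" using False by auto
      have ab: "\<bar>a' - a\<bar> = 1" using cc aa by linarith
      have a_rng: "0 \<le> a" "a \<le> int n" "0 \<le> a'" "a' \<le> int n" "clamp n a = a" "clamp n a' = a'"
        using False ab by (auto simp: clamp_def)
      have e: "cross_w K \<omega> (a,b) (a',b') \<le> S"
        using cross_w_local[OF ag a_rng(1-4), of b b'] Sab by simp
      have "reach (cross_w K \<omega>) (a, b) v (S + Lp)"
        by (rule reach_cons[where w="cross_w K \<omega>", OF e]) (use R a_rng in simp)
      then show ?thesis using a_rng by simp
    qed
    then show ?thesis using L u by simp
  qed
qed

lemma cross_local_le:
  assumes ag: "\<forall>e\<in>Eset K n. \<omega> e = \<omega>' e"
  shows "cross_dist K n \<omega> \<le> cross_dist K n \<omega>'"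
  unfolding cross_dist_def shortest_def
proof (rule INF_greatest)
  fix p :: "(int \<times> int) list" assume p: "p \<in> {p. p \<noteq> [] \<and> hd p = (0, 0) \<and> last p = (int n, 0)}"
  show "(INF p\<in>{p. p \<noteq> [] \<and> hd p = (0, 0) \<and> last p = (int n, 0)}. path_len (cross_w K \<omega>) p)
        \<le> path_len (cross_w K \<omega>') p"
  proof (cases "path_len (cross_w K \<omega>') p < \<top>")
    case False
    then have "path_len (cross_w K \<omega>') p = \<top>" using top.not_eq_extremum by blast
    then show ?thesis by simp
  next
    case True
    have v: "0 \<le> fst (int n, 0::int)" "fst (int n, 0::int) \<le> int n" "in_strip K (int n, 0)"
      by (auto simp: in_strip_def)
    have "reach (cross_w K \<omega>) (clamp n (fst (hd p)), snd (hd p)) (int n, 0) (path_len (cross_w K \<omega>') p)"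
      using MC[OF ag v, of p] p True by auto
    then have "reach (cross_w K \<omega>) (0,0) (int n, 0) (path_len (cross_w K \<omega>') p)"
      using p by (simp add: clamp_def)
    then show ?thesis using shortest_le unfolding shortest_def by blast
  qed
qed

lemma cross_local:
  assumes ag: "\<forall>e\<in>Eset K n. \<omega> e = \<omega>' e"
  shows "cross_dist K n \<omega> = cross_dist K n \<omega>'"
  using cross_local_le[OF ag] cross_local_le[of K n \<omega>' \<omega>] ag by (auto intro: antisym)

lemma path_len_mono: "(\<And>u w. f u w \<le> g u w) \<Longrightarrow> path_len f p \<le> path_len g p"
proof (induction p)
  case Nil then show ?case by (simp add: path_len_def)
next
  case (Cons u p)
  then show ?case by (cases p) (simp_all add: path_len_Cons add_mono)
qed

lemma cross_w_mono:
  assumes "\<forall>e. x e \<longrightarrow> y e"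
  shows "cross_w K y u w \<le> cross_w K x u w"
proof -
  define Cx where "Cx = (in_strip K u \<and> in_strip K w \<and>
         ((w = (fst u + 1, snd u) \<and> x (True, fst u, snd u)) \<or>
          (u = (fst w + 1, snd w) \<and> x (True, fst w, snd w)) \<or>
          w = (fst u, snd u + 1) \<or> u = (fst w, snd w + 1)))"
  define Cy where "Cy = (in_strip K u \<and> in_strip K w \<and>
         ((w = (fst u + 1, snd u) \<and> y (True, fst u, snd u)) \<or>
          (u = (fst w + 1, snd w) \<and> y (True, fst w, snd w)) \<or>
          w = (fst u, snd u + 1) \<or> u = (fst w, snd w + 1)))"
  define D where "D = (in_strip K u \<and> in_strip K w \<and>
         (\<bar>fst w - fst u\<bar> = 1 \<and> \<bar>snd w - snd u\<bar> = 1))"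
  have ex: "cross_w K x u w = (if Cx then 1 else if D then 2 else \<top>)"
    unfolding cross_w_def Cx_def D_def by (rule refl)
  have ey: "cross_w K y u w = (if Cy then 1 else if D then 2 else \<top>)"
    unfolding cross_w_def Cy_def D_def by (rule refl)
  have "Cx \<longrightarrow> Cy" unfolding Cx_def Cy_def using assms by blast
  then show ?thesis unfolding ex ey by (cases Cy; cases Cx; cases D) simp_all
qed

lemma cross_dist_mono:
  assumes "\<forall>e. x e \<longrightarrow> y e"
  shows "cross_dist K n y \<le> cross_dist K n x"
  unfolding cross_dist_def shortest_def
proof (rule INF_mono)
  fix m :: "(int \<times> int) list" assume m: "m \<in> {p. p \<noteq> [] \<and> hd p = (0, 0) \<and> last p = (int n, 0)}"
  show "\<exists>n\<in>{p. p \<noteq> [] \<and> hd p = (0, 0) \<and> last p = (int n, 0)}. path_len (cross_w K y) n \<le> path_len (cross_w K x) m"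
    by (rule bexI[OF _ m]) (rule path_len_mono, rule cross_w_mono[OF assms])
qed

lemma Acond_mono:
  assumes "\<forall>e. x e \<longrightarrow> y e" "Acond K n x"
  shows "Acond K n y"
  unfolding Acond_def
proof (intro allI impI)
  fix i j assume h: "0 \<le> i \<and> i < int n \<and> - int K \<le> j \<and> j < int K"
  have "card {e \<in> square_edges i j. \<not> y e} \<le> card {e \<in> square_edges i j. \<not> x e}"
    by (rule card_mono) (use assms(1) in \<open>auto simp: square_edges_def\<close>)
  also have "\<dots> \<le> 1" using assms(2) h unfolding Acond_def by blast
  finally show "card {e \<in> square_edges i j. \<not> y e} \<le> 1" .
qed

lemma Acond_local:
  assumes "Eset K n \<union> Vset K n \<subseteq> J"
  shows "Acond K n (restrict \<omega> J) = Acond K n \<omega>"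
proof -
  have "{e \<in> square_edges i j. \<not> restrict \<omega> J e} = {e \<in> square_edges i j. \<not> \<omega> e}"
    if "0 \<le> i \<and> i < int n \<and> - int K \<le> j \<and> j < int K" for i j
  proof -
    have "square_edges i j \<subseteq> J" using that assms
      by (auto simp: square_edges_def Eset_mem Vset_mem subset_iff)
    then show ?thesis by auto
  qed
  then show ?thesis unfolding Acond_def by simp
qed


lemma div_le:
  fixes X Y a :: ennreal
  assumes "X \<le> Y * a" "a \<noteq> \<top>"
  shows "X / a \<le> Y"
proof (cases "a = 0")
  case True
  then have "X = 0" using assms by simp
  then show ?thesis by simp
next
  case False
  have "X / a \<le> (Y * a) / a" using assms(1) by (simp add: divide_right_mono_ennreal)
  also have "\<dots> = Y" using False assms(2) by (simp add: mult_divide_eq_ennreal)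
  finally show ?thesis .
qed

theorem proposition7:
  fixes K n :: nat and \<epsilon> :: real
  assumes "K \<ge> 1" and "0 < \<epsilon>" and "\<epsilon> < 1"
  shows "(\<integral>\<^sup>+ \<omega>. perc_dist K n \<omega> * indicator (event_A K \<epsilon> n) \<omega> \<partial>perc_space K \<epsilon>)
            / emeasure (perc_space K \<epsilon>) (event_A K \<epsilon> n)
         \<le> (\<integral>\<^sup>+ \<omega>. cross_dist K n \<omega> \<partial>cross_space K \<epsilon>) + 3 * of_nat K"
proof -
  define p where "p = bernoulli_pmf (1 - \<epsilon>)"
  define w where "w = (\<lambda>b. ennreal (pmf p b))"
  define E where "E = Eset K n"
  define J where "J = Eset K n \<union> Vset K n"
  define Cr where "Cr = cross_dist K n"
  define Ac where "Ac = (\<lambda>x. if Acond K n x then 1 else (0::ennreal))"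
  define P where "P = perc_space K \<epsilon>"
  define Q where "Q = cross_space K \<epsilon>"
  define A where "A = event_A K \<epsilon> n"
  have P_eq: "P = PiM (strip_edges K) (\<lambda>_. measure_pmf p)" by (simp add: P_def perc_space_def p_def)
  have Q_eq: "Q = PiM (horiz_edges K) (\<lambda>_. measure_pmf p)" by (simp add: Q_def cross_space_def p_def)
  have finE: "finite E" unfolding E_def Eset_def by simp
  have finJ: "finite J" unfolding J_def Eset_def Vset_def by simp
  have EJ: "E \<subseteq> J" by (simp add: E_def J_def)
  have Eh: "E \<subseteq> horiz_edges K" by (auto simp: E_def Eset_def horiz_edges_def)
  have Js: "J \<subseteq> strip_edges K" by (auto simp: J_def Eset_def Vset_def strip_edges_def)
  have Es: "E \<subseteq> strip_edges K" using EJ Js by blast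
  have wsum: "w True + w False = 1"
    using assms(2,3) by (simp add: w_def p_def ennreal_plus[symmetric] del: ennreal_plus)
  have CrJ: "Cr (restrict \<omega> J) = Cr \<omega>" for \<omega>
    unfolding Cr_def by (rule cross_local) (use EJ in \<open>auto simp: E_def\<close>)
  have CrE: "Cr (restrict \<omega> E) = Cr \<omega>" for \<omega>
    unfolding Cr_def by (rule cross_local) (auto simp: E_def)
  have AcJ: "Ac (restrict \<omega> J) = Ac \<omega>" for \<omega>
    unfolding Ac_def using Acond_local[of K n J \<omega>] by (simp add: J_def)
  have spP: "space P = PiE (strip_edges K) (\<lambda>_. UNIV)" by (simp add: P_eq space_PiM_pmf)
  have indA: "indicator A \<omega> = Ac \<omega>" if "\<omega> \<in> space P" for \<omega>
    using that by (simp add: A_def Ac_def event_A_def Acond_def P_def indicator_def)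
  have step1: "(\<integral>\<^sup>+\<omega>. perc_dist K n \<omega> * indicator A \<omega> \<partial>P) \<le> (\<integral>\<^sup>+\<omega>. (Cr \<omega> + 3 * of_nat K) * Ac \<omega> \<partial>P)"
  proof (rule nn_integral_mono)
    fix \<omega> assume \<omega>: "\<omega> \<in> space P"
    show "perc_dist K n \<omega> * indicator A \<omega> \<le> (Cr \<omega> + 3 * of_nat K) * Ac \<omega>"
    proof (cases "Acond K n \<omega>")
      case True
      then show ?thesis using perc_le_cross[OF True assms(1)] indA[OF \<omega>]
        by (simp add: Ac_def Cr_def)
    next
      case False
      then show ?thesis using indA[OF \<omega>] by (simp add: Ac_def)
    qed
  qed
  have step2: "(\<integral>\<^sup>+\<omega>. (Cr \<omega> + 3 * of_nat K) * Ac \<omega> \<partial>P) = SW J w (\<lambda>x. (Cr x + 3 * of_nat K) * Ac x)"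
  proof -
    have "(\<integral>\<^sup>+\<omega>. (Cr \<omega> + 3 * of_nat K) * Ac \<omega> \<partial>P)
        = (\<integral>\<^sup>+\<omega>. (\<lambda>x. (Cr x + 3 * of_nat K) * Ac x) (restrict \<omega> J) \<partial>P)"
      by (simp add: CrJ AcJ)
    also have "\<dots> = SW J w (\<lambda>x. (Cr x + 3 * of_nat K) * Ac x)"
      unfolding P_eq w_def by (rule glue[OF finJ Js])
    finally show ?thesis .
  qed
  have step3: "SW J w (\<lambda>x. (Cr x + 3 * of_nat K) * Ac x) = SW J w (\<lambda>x. Ac x * Cr x) + 3 * of_nat K * SW J w Ac"
    unfolding SW_def by (simp add: sum.distrib sum_distrib_left algebra_simps)
  have incA: "incr Ac" unfolding incr_def Ac_def using Acond_mono by fastforce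
  have decC: "decr Cr" unfolding decr_def Cr_def using cross_dist_mono by blast
  have step4: "SW J w (\<lambda>x. Ac x * Cr x) \<le> SW J w Ac * SW J w Cr"
    by (rule harris[OF finJ wsum incA decC])
  have step5: "SW J w Cr = (\<integral>\<^sup>+\<omega>. Cr \<omega> \<partial>Q)"
  proof -
    have "SW J w Cr = (\<integral>\<^sup>+\<omega>. Cr (restrict \<omega> J) \<partial>P)"
      unfolding P_eq w_def by (rule glue[OF finJ Js, symmetric])
    also have "\<dots> = (\<integral>\<^sup>+\<omega>. Cr (restrict \<omega> E) \<partial>P)" by (simp add: CrJ CrE)
    also have "\<dots> = SW E w Cr"
      unfolding P_eq w_def by (rule glue[OF finE Es])
    also have "\<dots> = (\<integral>\<^sup>+\<omega>. Cr (restrict \<omega> E) \<partial>Q)"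
      unfolding Q_eq w_def by (rule glue[OF finE Eh, symmetric])
    also have "\<dots> = (\<integral>\<^sup>+\<omega>. Cr \<omega> \<partial>Q)" by (simp add: CrE)
    finally show ?thesis .
  qed
  have Ameas: "A \<in> sets P"
  proof -
    have "(\<lambda>\<omega>. restrict \<omega> J) -` {x \<in> PiE J (\<lambda>_. UNIV). Acond K n x} \<inter> space P \<in> sets P"
      unfolding P_eq
      by (rule measurable_sets[OF measurable_restrict_subset[OF Js] sets_PiM_pmf_all[OF finJ]])
         (auto simp: space_PiM_pmf)
    moreover have "(\<lambda>\<omega>. restrict \<omega> J) -` {x \<in> PiE J (\<lambda>_. UNIV). Acond K n x} \<inter> space P = A"
    proof -
      have Aeq: "A = {\<omega> \<in> space P. Acond K n \<omega>}"
        unfolding A_def event_A_def Acond_def P_def by simp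
      have AL: "Acond K n (restrict \<omega> J) = Acond K n \<omega>" for \<omega>
        using Acond_local[of K n J \<omega>] by (simp add: J_def)
      show ?thesis unfolding Aeq using AL by (auto simp: spP)
    qed
    ultimately show ?thesis by simp
  qed
  have step6: "SW J w Ac = emeasure P A"
  proof -
    have "emeasure P A = (\<integral>\<^sup>+\<omega>. indicator A \<omega> \<partial>P)" by (rule nn_integral_indicator[OF Ameas, symmetric])
    also have "\<dots> = (\<integral>\<^sup>+\<omega>. Ac (restrict \<omega> J) \<partial>P)"
      by (rule nn_integral_cong) (simp add: indA AcJ)
    also have "\<dots> = SW J w Ac"
      unfolding P_eq w_def by (rule glue[OF finJ Js])
    finally show ?thesis by simp
  qed
  have PA: "emeasure P A \<noteq> \<top>"
  proof -
    interpret product_prob_space "\<lambda>_. measure_pmf p" "strip_edges K" by (rule pps)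
    show ?thesis unfolding P_eq by simp
  qed
  have "(\<integral>\<^sup>+\<omega>. perc_dist K n \<omega> * indicator A \<omega> \<partial>P)
        \<le> ((\<integral>\<^sup>+\<omega>. Cr \<omega> \<partial>Q) + 3 * of_nat K) * emeasure P A"
  proof -
    have "(\<integral>\<^sup>+\<omega>. perc_dist K n \<omega> * indicator A \<omega> \<partial>P)
        \<le> SW J w (\<lambda>x. Ac x * Cr x) + 3 * of_nat K * SW J w Ac"
      using step1 step2 step3 by simp
    also have "\<dots> \<le> SW J w Ac * SW J w Cr + 3 * of_nat K * SW J w Ac"
      by (rule add_right_mono[OF step4])
    also have "\<dots> = (SW J w Cr + 3 * of_nat K) * SW J w Ac" by (simp add: algebra_simps)
    finally show ?thesis unfolding step5 step6 .
  qed
  then have "(\<integral>\<^sup>+\<omega>. perc_dist K n \<omega> * indicator A \<omega> \<partial>P) / emeasure P A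
        \<le> (\<integral>\<^sup>+\<omega>. Cr \<omega> \<partial>Q) + 3 * of_nat K"
    by (rule div_le[OF _ PA])
  then show ?thesis by (simp add: P_def Q_def A_def Cr_def)
qed

end
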